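(* Let $D\ge 1$ and let $g\in C^\infty$ be a Riemannian metric on $\mathbb{R}^D$ written as $g_x(u,v)=u^{\top}H(x)v$, such that there exist $c_1,c_2>0$ with $c_1\|u\|_2^2\le g_x(u,u)\le c_2\|u\|_2^2$ for all $x,u$, and $L_H\ge0$ with $\|H(x)-H(y)\|_{\mathcal{B}}\le L_H\|x-y\|_2$ for all $x,y$. Let $X^{(0)},X^{(1)}\subset\mathbb{R}^D$ be non-empty closed sets, at least one bounded. Then there exists a constant $C$ depending only on $c_1,c_2,L_H,d^g(X^{(0)},X^{(1)}),X^{(0)},X^{(1)}$ such that for every $N\ge1$ and every minimizer $\gamma^{*\mathrm{p}}_{\mathrm{tra},N}\in\operatorname{argmin}_{\gamma^{\mathrm{p}}\in\mathcal{C}^N_{\mathrm{p}}(X^{(0)},X^{(1)})}\mathcal{E}^g_{\mathrm{tra},N}(\gamma^{\mathrm{p}})$ with linear interpolation $\gamma^{*\mathrm{pl}}_{\mathrm{tra},N}$, $$\mathcal{L}^g(\gamma^{*\mathrm{pl}}_{\mathrm{tra},N})^2-\min_{\gamma\in\mathcal{C}_{\mathrm{ps}}(X^{(0)},X^{(1)})}\mathcal{L}^g(\gamma)^2\le\frac{C}{N^{1/2}}.$$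
   Context: $\|\cdot\|_2$ is the Euclidean norm and $\|A\|_{\mathcal{B}}$ the operator norm. $\mathcal{C}_{\mathrm{ps}}$ is the set of continuous piecewise $C^1$ curves $[0,1]\to\mathbb{R}^D$; $\mathcal{C}_{\mathrm{ps}}(X^{(0)},X^{(1)})$ those with $\gamma(0)\in X^{(0)},\gamma(1)\in X^{(1)}$. $\mathcal{E}^g(\gamma)=\int_0^1 g_{\gamma}(\dot\gamma,\dot\gamma)dt$, $\mathcal{L}^g(\gamma)=\int_0^1 g_\gamma(\dot\gamma,\dot\gamma)^{1/2}dt$, $d^g(x,y)=\inf\{\mathcal{L}^g(\gamma):\gamma\in\mathcal{C}_{\mathrm{ps}},\gamma(0)=x,\gamma(1)=y\}$, $d^g(X^{(0)},X^{(1)})=\inf_{x\in X^{(0)},y\in X^{(1)}}d^g(x,y)$. For $N\ge1$: $t_n=n/N$, $h=1/N$; $\mathcal{C}^N_{\mathrm{p}}(X^{(0)},X^{(1)})$ is the set of maps $\gamma^{\mathrm{p}}:\{t_0,\dots,t_N\}\to\mathbb{R}^D$ with $\gamma^{\mathrm{p}}(0)\in X^{(0)},\gamma^{\mathrm{p}}(1)\in X^{(1)}$; $\beta^{\mathrm{p}}(t_n)=(\gamma^{\mathrm{p}}(t_{n+1})-\gamma^{\mathrm{p}}(t_n))/h$; linear interpolation $\gamma^{\mathrm{pl}}(t_n+s)=(1-Ns)\gamma^{\mathrm{p}}(t_n)+Ns\gamma^{\mathrm{p}}(t_{n+1})$, $0\le s\le h$; $\mathcal{E}^g_{\mathrm{tra},N}(\gamma^{\mathrm{p}})=\frac1N\sum_{n=0}^{N-1}g_{(\gamma^{\mathrm{p}}(t_n)+\gamma^{\mathrm{p}}(t_{n+1}))/2}(\beta^{\mathrm{p}}(t_n),\beta^{\mathrm{p}}(t_n))$.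 *)

theory Defs
  imports "HOL-Analysis.Analysis"
begin

definition gmet :: "(real^'n \<Rightarrow> real^'n^'n) \<Rightarrow> real^'n \<Rightarrow> real^'n \<Rightarrow> real^'n \<Rightarrow> real" where
  "gmet H x u v = u \<bullet> (H x *v v)"

text \<open>C-infinity real functions on R^D: continuous, and every partial derivative
  exists everywhere and is again C-infinity (greatest fixed point).\<close>
coinductive smooth_fun :: "(real^'n \<Rightarrow> real) \<Rightarrow> bool" where
  "continuous_on UNIV f \<Longrightarrow>
   (\<And>i. \<exists>f'. (\<forall>x. ((\<lambda>t. f (x + t *\<^sub>R axis i 1)) has_real_derivative f' x) (at 0))
              \<and> smooth_fun f') \<Longrightarrow> smooth_fun f"

definition smooth_metric :: "(real^'n \<Rightarrow> real^'n^'n) \<Rightarrow> bool" where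
  "smooth_metric H \<longleftrightarrow> (\<forall>i j. smooth_fun (\<lambda>x. H x $ i $ j)) \<and> (\<forall>x. transpose (H x) = H x)"

definition pw_C1 :: "(real \<Rightarrow> 'a::real_normed_vector) \<Rightarrow> bool" where
  "pw_C1 \<gamma> \<longleftrightarrow> continuous_on {0..1} \<gamma> \<and>
     (\<exists>S. finite S \<and> {0,1} \<subseteq> S \<and> S \<subseteq> {0..1} \<and>
        (\<forall>a\<in>S. \<forall>b\<in>S. a < b \<and> {a<..<b} \<inter> S = {} \<longrightarrow>
           (\<exists>\<gamma>'. continuous_on {a..b} \<gamma>' \<and>
              (\<forall>t\<in>{a..b}. (\<gamma> has_vector_derivative \<gamma>' t) (at t within {a..b})))))"

definition curve_length :: "(real^'n \<Rightarrow> real^'n^'n) \<Rightarrow> (real \<Rightarrow> real^'n) \<Rightarrow> real" where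
  "curve_length H \<gamma> = integral {0..1} (\<lambda>t. let v = vector_derivative \<gamma> (at t within {0..1})
                                          in sqrt (gmet H (\<gamma> t) v v))"

definition gdist :: "(real^'n \<Rightarrow> real^'n^'n) \<Rightarrow> real^'n \<Rightarrow> real^'n \<Rightarrow> real" where
  "gdist H x y = Inf {curve_length H \<gamma> | \<gamma>. pw_C1 \<gamma> \<and> \<gamma> 0 = x \<and> \<gamma> 1 = y}"

definition gsetdist :: "(real^'n \<Rightarrow> real^'n^'n) \<Rightarrow> (real^'n) set \<Rightarrow> (real^'n) set \<Rightarrow> real" where
  "gsetdist H A B = Inf {gdist H x y | x y. x \<in> A \<and> y \<in> B}"

text \<open>Discrete curves: p n = gamma^p(t_n), n = 0..N. Trapezoidal/midpoint energy.\<close>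
definition E_tra :: "(real^'n \<Rightarrow> real^'n^'n) \<Rightarrow> nat \<Rightarrow> (nat \<Rightarrow> real^'n) \<Rightarrow> real" where
  "E_tra H N p = (1 / real N) * (\<Sum>n<N.
      let \<beta> = real N *\<^sub>R (p (Suc n) - p n)
      in gmet H ((1/2) *\<^sub>R (p n + p (Suc n))) \<beta> \<beta>)"

definition lin_interp :: "nat \<Rightarrow> (nat \<Rightarrow> real^'n) \<Rightarrow> real \<Rightarrow> real^'n" where
  "lin_interp N p t = (let n = min (nat \<lfloor>real N * t\<rfloor>) (N - 1); s = real N * t - real n
                       in (1 - s) *\<^sub>R p n + s *\<^sub>R p (Suc n))"

end

theory Submission imports Defs begin

lemma gmet_sum: "gmet H x u v = (\<Sum>i\<in>UNIV. \<Sum>j\<in>UNIV. u$i * H x $i$j * v$j)"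
  by (simp add: gmet_def inner_vec_def matrix_vector_mult_def sum_distrib_left mult.assoc)

lemma gmet_add_right: "gmet H x u (v + w) = gmet H x u v + gmet H x u w"
  by (simp add: gmet_def matrix_vector_right_distrib inner_add_right)
lemma gmet_add_left: "gmet H x (u + w) v = gmet H x u v + gmet H x w v"
  by (simp add: gmet_def inner_add_left)
lemma gmet_scale_right: "gmet H x u (c *\<^sub>R v) = c * gmet H x u v"
  by (simp add: gmet_def matrix_vector_mult_scaleR)
lemma gmet_scale_left: "gmet H x (c *\<^sub>R u) v = c * gmet H x u v"
  by (simp add: gmet_def)
lemma gmet_minus_left: "gmet H x (- u) v = - gmet H x u v"
  by (simp add: gmet_def)
lemma gmet_minus_right: "gmet H x u (- v) = - gmet H x u v"
  by (simp add: gmet_def vec.neg)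
lemma gmet_neg_neg: "gmet H x (- u) (- u) = gmet H x u u"
  by (simp add: gmet_minus_left gmet_minus_right)
lemma gmet_scale2: "gmet H x (c *\<^sub>R u) (c *\<^sub>R u) = c^2 * gmet H x u u"
  by (simp add: gmet_scale_left gmet_scale_right power2_eq_square)

lemma gmet_sym: assumes "transpose (H x) = H x" shows "gmet H x u v = gmet H x v u"
proof -
  have "gmet H x u v = (u v* H x) \<bullet> v" by (simp add: gmet_def dot_lmul_matrix)
  also have "u v* H x = transpose (H x) *v u" by (simp add: transpose_matrix_vector)
  finally show ?thesis using assms by (simp add: gmet_def inner_commute)
qed

lemma bounded_linear_gmet: "bounded_linear (\<lambda>v. gmet H x u v)"
  unfolding gmet_def by (intro bounded_linear_inner_right_comp matrix_vector_mul_bounded_linear) 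

lemma gmet_CS:
  assumes sym: "transpose (H x) = H x" and pos: "\<And>w. 0 \<le> gmet H x w w"
    and posd: "\<And>w. w \<noteq> 0 \<Longrightarrow> 0 < gmet H x w w"
  shows "(gmet H x u w)^2 \<le> gmet H x u u * gmet H x w w"
proof (cases "w = 0")
  case True then show ?thesis by (simp add: gmet_def)
next
  case False
  define a where "a = gmet H x w w"
  define b where "b = gmet H x u w"
  define c where "c = gmet H x u u"
  have a: "a > 0" using posd[OF False] a_def by simp
  define t where "t = - b / a"
  have "0 \<le> gmet H x (u + t *\<^sub>R w) (u + t *\<^sub>R w)" by (rule pos)
  also have "\<dots> = c + 2 * t * b + t^2 * a"
    using gmet_sym[of H x u w, OF sym]
    by (simp add: gmet_add_left gmet_add_right gmet_scale_left gmet_scale_right a_def b_def c_def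
        power2_eq_square algebra_simps)
  also have "\<dots> = c - b^2 / a" using a by (simp add: t_def power2_eq_square field_simps)
  finally have "b^2 \<le> c * a" using a by (simp add: field_simps)
  then show ?thesis by (simp add: a_def b_def c_def)
qed

lemma gmet_lip:
  assumes "onorm (\<lambda>v. (H x - H y) *v v) \<le> LH * dist x y"
  shows "\<bar>gmet H x u u - gmet H y u u\<bar> \<le> LH * dist x y * (norm u)^2"
proof -
  have "gmet H x u u - gmet H y u u = u \<bullet> ((H x - H y) *v u)"
    by (simp add: gmet_def matrix_vector_mult_diff_rdistrib inner_diff_right)
  moreover have "\<bar>u \<bullet> ((H x - H y) *v u)\<bar> \<le> norm u * norm ((H x - H y) *v u)" by (rule Cauchy_Schwarz_ineq2)
  moreover have "norm ((H x - H y) *v u) \<le> onorm (\<lambda>v. (H x - H y) *v v) * norm u"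
    by (rule onorm[OF matrix_vector_mul_bounded_linear])
  moreover have "onorm (\<lambda>v. (H x - H y) *v v) * norm u \<le> LH * dist x y * norm u"
    by (rule mult_right_mono[OF assms norm_ge_zero])
  ultimately have "\<bar>gmet H x u u - gmet H y u u\<bar> \<le> norm u * (LH * dist x y * norm u)"
    by (metis (no_types, lifting) mult_left_mono norm_ge_zero order_trans)
  then show ?thesis by (simp add: power2_eq_square algebra_simps)
qed

definition vd :: "(real \<Rightarrow> 'a::real_normed_vector) \<Rightarrow> real \<Rightarrow> 'a" where
  "vd \<gamma> t = vector_derivative \<gamma> (at t within {0..1})"

lemma pw_C1_S:
  assumes "pw_C1 \<gamma>"
  shows "\<exists>S. finite S \<and> {0,1} \<subseteq> S \<and> S \<subseteq> {0..1} \<and>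
    (\<forall>u w. 0 \<le> u \<and> u < w \<and> w \<le> 1 \<and> {u<..<w} \<inter> S = {} \<longrightarrow>
      (\<exists>\<gamma>'. continuous_on {u..w} \<gamma>' \<and>
         (\<forall>t\<in>{u<..<w}. vd \<gamma> t = \<gamma>' t \<and> (\<gamma> has_vector_derivative \<gamma>' t) (at t))))"
proof -
  obtain S where S: "finite S" "{0,1} \<subseteq> S" "S \<subseteq> {0..1}"
    and P: "\<forall>a\<in>S. \<forall>b\<in>S. a < b \<and> {a<..<b} \<inter> S = {} \<longrightarrow>
           (\<exists>\<gamma>'. continuous_on {a..b} \<gamma>' \<and>
              (\<forall>t\<in>{a..b}. (\<gamma> has_vector_derivative \<gamma>' t) (at t within {a..b})))"
    using assms unfolding pw_C1_def by blast
  have "(\<exists>\<gamma>'. continuous_on {u..w} \<gamma>' \<and>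
         (\<forall>t\<in>{u<..<w}. vd \<gamma> t = \<gamma>' t \<and> (\<gamma> has_vector_derivative \<gamma>' t) (at t)))"
    if uw: "0 \<le> u" "u < w" "w \<le> 1" "{u<..<w} \<inter> S = {}" for u w
  proof -
    define A where "A = {s\<in>S. s \<le> u}"
    define B where "B = {s\<in>S. w \<le> s}"
    have A: "finite A" "A \<noteq> {}" using S uw unfolding A_def by auto
    have B: "finite B" "B \<noteq> {}" using S uw unfolding B_def by auto
    define a where "a = Max A"
    define b where "b = Min B"
    have aA: "a \<in> A" using A Max_in a_def by blast
    have bB: "b \<in> B" using B Min_in b_def by blast
    have aS: "a \<in> S" "a \<le> u" using aA A_def by auto
    have bS: "b \<in> S" "w \<le> b" using bB B_def by auto
    have gap: "{a<..<b} \<inter> S = {}"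
    proof (rule ccontr)
      assume "{a<..<b} \<inter> S \<noteq> {}"
      then obtain s where s: "s \<in> S" "a < s" "s < b" by auto
      show False
      proof (cases "s \<le> u")
        case True then have "s \<in> A" using s A_def by auto
        then have "s \<le> a" using A a_def by simp
        then show False using s by simp
      next
        case False
        show False
        proof (cases "w \<le> s")
          case True then have "s \<in> B" using s B_def by auto
          then have "b \<le> s" using B b_def by simp
          then show False using s by simp
        next
          case False
          then have "s \<in> {u<..<w} \<inter> S" using \<open>\<not> s \<le> u\<close> s by auto
          then show False using uw(4) by blast
        qed
      qed
    qed
    have ab: "a < b" using aS bS uw by linarith
    obtain \<gamma>' where g': "continuous_on {a..b} \<gamma>'"
      "\<forall>t\<in>{a..b}. (\<gamma> has_vector_derivative \<gamma>' t) (at t within {a..b})"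
      using P aS bS ab gap by blast
    show ?thesis
    proof (intro exI conjI ballI)
      show "continuous_on {u..w} \<gamma>'" using g'(1) by (rule continuous_on_subset) (use aS bS in auto)
    next
      fix t assume t: "t \<in> {u<..<w}"
      have "(\<gamma> has_vector_derivative \<gamma>' t) (at t within {a..b})" using g'(2) t aS bS by auto
      moreover have "at t within {a..b} = at t" using t aS bS by (intro at_within_Icc_at) auto
      ultimately show d: "(\<gamma> has_vector_derivative \<gamma>' t) (at t)" by simp
      have "at t within {0..1} = at t" using t uw by (intro at_within_Icc_at) auto
      then show "vd \<gamma> t = \<gamma>' t" unfolding vd_def using d by (simp add: vector_derivative_at)
    qed
  qed
  then show ?thesis using S by blast
qed

definition pwS :: "(real \<Rightarrow> 'a::real_normed_vector) \<Rightarrow> real set \<Rightarrow> bool" where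
  "pwS \<gamma> S \<longleftrightarrow> finite S \<and> {0,1} \<subseteq> S \<and> S \<subseteq> {0..1} \<and>
    (\<forall>u w. 0 \<le> u \<and> u < w \<and> w \<le> 1 \<and> {u<..<w} \<inter> S = {} \<longrightarrow>
      (\<exists>\<gamma>'. continuous_on {u..w} \<gamma>' \<and>
         (\<forall>t\<in>{u<..<w}. vd \<gamma> t = \<gamma>' t \<and> (\<gamma> has_vector_derivative \<gamma>' t) (at t))))"

lemma pw_C1_pwS: "pw_C1 \<gamma> \<Longrightarrow> \<exists>S. pwS \<gamma> S"
  unfolding pwS_def by (rule pw_C1_S)

lemma finite_isolated:
  fixes x :: real
  assumes "finite S"
  shows "\<exists>d>0. \<forall>s\<in>S. s \<noteq> x \<longrightarrow> d \<le> \<bar>s - x\<bar>"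
proof -
  define D where "D = insert 1 ((\<lambda>s. \<bar>s - x\<bar>) ` (S - {x}))"
  have D: "finite D" "D \<noteq> {}" using assms D_def by auto
  have pos: "\<forall>e\<in>D. 0 < e" using D_def by auto
  have "Min D > 0" using D pos by simp
  moreover have "\<forall>s\<in>S. s \<noteq> x \<longrightarrow> Min D \<le> \<bar>s - x\<bar>" using D D_def by auto
  ultimately show ?thesis by blast
qed

lemma pwS_local:
  assumes "pwS \<gamma> S"
  shows "\<exists>d>0. \<forall>u w. {u<..<w} \<subseteq> ball x d \<longrightarrow> {u<..<w} \<inter> S \<subseteq> {x}"
proof -
  have "finite S" using assms pwS_def by blast
  then obtain d where d: "d > 0" "\<forall>s\<in>S. s \<noteq> x \<longrightarrow> d \<le> \<bar>s - x\<bar>"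
    using finite_isolated by blast
  have "{u<..<w} \<inter> S \<subseteq> {x}" if "{u<..<w} \<subseteq> ball x d" for u w
  proof
    fix s assume s: "s \<in> {u<..<w} \<inter> S"
    then have "dist x s < d" using that by auto
    then have "\<bar>s - x\<bar> < d" by (simp add: dist_real_def)
    then show "s \<in> {x}" using d s by force
  qed
  then show ?thesis using d by blast
qed

lemma pwS_deriv:
  assumes "pwS \<gamma> S" "t \<in> {0<..<1} - S"
  shows "(\<gamma> has_vector_derivative vd \<gamma> t) (at t)"
proof -
  obtain d where d: "d > 0" "\<forall>u w. {u<..<w} \<subseteq> ball t d \<longrightarrow> {u<..<w} \<inter> S \<subseteq> {t}"
    using pwS_local[OF assms(1)] by blast
  define u where "u = max 0 (t - d/2)"
  define w where "w = min 1 (t + d/2)"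
  have uw: "0 \<le> u" "u < t" "t < w" "w \<le> 1" using assms d u_def w_def by auto
  have "{u<..<w} \<subseteq> ball t d" using u_def w_def d by (auto simp: dist_real_def)
  then have "{u<..<w} \<inter> S = {}" using d assms(2) by blast
  then obtain \<gamma>' where "\<forall>s\<in>{u<..<w}. vd \<gamma> s = \<gamma>' s \<and> (\<gamma> has_vector_derivative \<gamma>' s) (at s)"
  proof -
    have "\<forall>u w. 0 \<le> u \<and> u < w \<and> w \<le> 1 \<and> {u<..<w} \<inter> S = {} \<longrightarrow>
      (\<exists>\<gamma>'. continuous_on {u..w} \<gamma>' \<and>
         (\<forall>t\<in>{u<..<w}. vd \<gamma> t = \<gamma>' t \<and> (\<gamma> has_vector_derivative \<gamma>' t) (at t)))"
      using assms(1) unfolding pwS_def by blast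
    moreover have "u < w" using uw by simp
    ultimately show ?thesis using uw \<open>{u<..<w} \<inter> S = {}\<close> that by blast
  qed
  then show ?thesis using uw by auto
qed

lemma pwS_piece_integrable:
  fixes \<Phi> :: "'a::real_normed_vector \<Rightarrow> 'a \<Rightarrow> 'b::banach"
  assumes "pwS \<gamma> S" "continuous_on {0..1} \<gamma>" "continuous_on UNIV (\<lambda>z. \<Phi> (fst z) (snd z))"
    "0 \<le> u" "u \<le> w" "w \<le> 1" "{u<..<w} \<inter> S = {}"
  shows "(\<lambda>t. \<Phi> (\<gamma> t) (vd \<gamma> t)) integrable_on {u..w}"
proof (cases "u = w")
  case True then show ?thesis using integrable_on_refl[of _ u] by (simp add: cbox_interval)
next
  case False
  then obtain \<gamma>' where g': "continuous_on {u..w} \<gamma>'"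
    "\<forall>t\<in>{u<..<w}. vd \<gamma> t = \<gamma>' t \<and> (\<gamma> has_vector_derivative \<gamma>' t) (at t)"
    using assms unfolding pwS_def by (metis order_le_less)
  have cg: "continuous_on {u..w} \<gamma>" using assms(2) by (rule continuous_on_subset) (use assms in auto)
  have "continuous_on {u..w} (\<lambda>t. (\<gamma> t, \<gamma>' t))" using cg g'(1) by (intro continuous_intros)
  then have "continuous_on {u..w} ((\<lambda>z. \<Phi> (fst z) (snd z)) \<circ> (\<lambda>t. (\<gamma> t, \<gamma>' t)))"
    by (rule continuous_on_compose) (rule continuous_on_subset[OF assms(3)], simp)
  then have "(\<lambda>t. \<Phi> (\<gamma> t) (\<gamma>' t)) integrable_on {u..w}"
    by (intro integrable_continuous_interval) (simp add: o_def)
  then show ?thesis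
    by (rule integrable_spike[where S="{u,w}"]) (use g'(2) in auto)
qed

lemma pwS_integrable:
  fixes \<Phi> :: "'a::real_normed_vector \<Rightarrow> 'a \<Rightarrow> 'b::banach"
  assumes "pwS \<gamma> S" "continuous_on {0..1} \<gamma>" "continuous_on UNIV (\<lambda>z. \<Phi> (fst z) (snd z))"
  shows "(\<lambda>t. \<Phi> (\<gamma> t) (vd \<gamma> t)) integrable_on {0..1}"
proof -
  have "\<exists>d>0. \<forall>u v. x \<in> cbox u v \<and> cbox u v \<subseteq> ball x d \<and> cbox u v \<subseteq> cbox 0 1 \<longrightarrow>
          (\<lambda>t. \<Phi> (\<gamma> t) (vd \<gamma> t)) integrable_on cbox u v" if x: "x \<in> cbox 0 (1::real)" for x
  proof -
    obtain d where d: "d > 0" "\<forall>u w. {u<..<w} \<subseteq> ball x d \<longrightarrow> {u<..<w} \<inter> S \<subseteq> {x}"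
      using pwS_local[OF assms(1)] by blast
    have "(\<lambda>t. \<Phi> (\<gamma> t) (vd \<gamma> t)) integrable_on {u..v}"
      if uv: "x \<in> {u..v}" "{u..v} \<subseteq> ball x d" "{u..v} \<subseteq> {0..1}" for u v
    proof -
      have u01: "0 \<le> u" "v \<le> 1" using uv by auto
      have "{u<..<x} \<subseteq> ball x d" using uv by auto
      then have "{u<..<x} \<inter> S \<subseteq> {x}" using d(2) by blast
      then have "{u<..<x} \<inter> S = {}" by auto
      then have i1: "(\<lambda>t. \<Phi> (\<gamma> t) (vd \<gamma> t)) integrable_on {u..x}"
        using uv u01 by (intro pwS_piece_integrable[OF assms]) auto
      have "{x<..<v} \<subseteq> ball x d" using uv by auto
      then have "{x<..<v} \<inter> S \<subseteq> {x}" using d(2) by blast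
      then have "{x<..<v} \<inter> S = {}" by auto
      then have i2: "(\<lambda>t. \<Phi> (\<gamma> t) (vd \<gamma> t)) integrable_on {x..v}"
        using uv u01 by (intro pwS_piece_integrable[OF assms]) auto
      show ?thesis using uv by (intro Henstock_Kurzweil_Integration.integrable_combine[OF _ _ i1 i2]) auto
    qed
    then show ?thesis using d(1) by (auto simp: cbox_interval)
  qed
  then have "(\<lambda>t. \<Phi> (\<gamma> t) (vd \<gamma> t)) integrable_on cbox 0 1"
    by (intro integrable_on_little_subintervals) blast
  then show ?thesis by (simp add: cbox_interval)
qed

lemma pwS_FTC:
  fixes \<gamma> :: "real \<Rightarrow> 'a::banach"
  assumes "pwS \<gamma> S" "continuous_on {0..1} \<gamma>" "0 \<le> a" "a \<le> b" "b \<le> 1"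
  shows "(vd \<gamma> has_integral \<gamma> b - \<gamma> a) {a..b}"
proof (rule fundamental_theorem_of_calculus_interior_strong[where S=S])
  show "finite S" using assms pwS_def by blast
  show "a \<le> b" by fact
  show "continuous_on {a..b} \<gamma>" using assms(2) by (rule continuous_on_subset) (use assms in auto)
  fix t assume "t \<in> {a<..<b} - S"
  then have "t \<in> {0<..<1} - S" using assms by auto
  then show "(\<gamma> has_vector_derivative vd \<gamma> t) (at t)" by (rule pwS_deriv[OF assms(1)])
qed

definition Hok :: "(real^'n \<Rightarrow> real^'n^'n) \<Rightarrow> real \<Rightarrow> real \<Rightarrow> real \<Rightarrow> bool" where
  "Hok H c1 c2 LH \<longleftrightarrow> c1 > 0 \<and> LH \<ge> 0 \<and> (\<forall>x. transpose (H x) = H x) \<and>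
     (\<forall>x u. c1 * norm u ^ 2 \<le> gmet H x u u \<and> gmet H x u u \<le> c2 * norm u ^ 2) \<and>
     (\<forall>x y. onorm (\<lambda>v. (H x - H y) *v v) \<le> LH * dist x y) \<and>
     (\<forall>i j. continuous_on UNIV (\<lambda>x. H x $ i $ j))"

definition fl :: "(real^'n \<Rightarrow> real^'n^'n) \<Rightarrow> (real \<Rightarrow> real^'n) \<Rightarrow> real \<Rightarrow> real" where
  "fl H \<gamma> t = sqrt (gmet H (\<gamma> t) (vd \<gamma> t) (vd \<gamma> t))"

lemma curve_length_fl: "curve_length H \<gamma> = integral {0..1} (fl H \<gamma>)"
  unfolding curve_length_def fl_def[abs_def] vd_def Let_def by simp

lemma smooth_fun_cont: "smooth_fun f \<Longrightarrow> continuous_on UNIV f"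
  by (erule smooth_fun.cases) auto

lemma Hok_cont:
  assumes "Hok H c1 c2 LH"
  shows "continuous_on UNIV (\<lambda>z::(real^'n) \<times> (real^'n). sqrt (gmet H (fst z) (snd z) (snd z)))"
proof -
  have c: "continuous_on UNIV (\<lambda>x. H x $ i $ j)" for i j using assms Hok_def by blast
  have c2: "continuous_on UNIV (\<lambda>z::(real^'n) \<times> (real^'n). H (fst z) $ i $ j)" for i j
    by (rule continuous_on_compose2[OF c[of i j]]) (auto intro: continuous_intros)
  show ?thesis unfolding gmet_sum
    by (intro continuous_intros c2)
qed

lemma Hok_pos: "Hok H c1 c2 LH \<Longrightarrow> c1 * norm u ^ 2 \<le> gmet H x u u"
  and Hok_up: "Hok H c1 c2 LH \<Longrightarrow> gmet H x u u \<le> c2 * norm u ^ 2"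
  and Hok_sym: "Hok H c1 c2 LH \<Longrightarrow> transpose (H x) = H x"
  and Hok_c1: "Hok H c1 c2 LH \<Longrightarrow> c1 > 0"
  and Hok_LH: "Hok H c1 c2 LH \<Longrightarrow> LH \<ge> 0"
  and Hok_lip: "Hok H c1 c2 LH \<Longrightarrow> onorm (\<lambda>v. (H x - H y) *v v) \<le> LH * dist x y"
  unfolding Hok_def by blast+

lemma Hok_nonneg: "Hok H c1 c2 LH \<Longrightarrow> 0 \<le> gmet H x u u"
  by (meson Hok_c1 Hok_pos order_trans less_imp_le mult_nonneg_nonneg zero_le_power2 norm_ge_zero)

lemma Hok_posd: assumes "Hok H c1 c2 LH" "u \<noteq> 0" shows "0 < gmet H x u u"
proof -
  have "c1 > 0" using Hok_c1[OF assms(1)] .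
  moreover have "norm u ^ 2 > 0" using assms(2) by simp
  ultimately have "0 < c1 * norm u ^ 2" by simp
  then show ?thesis using Hok_pos[OF assms(1)] by (meson less_le_trans)
qed

lemma Hok_norm_le: assumes "Hok H c1 c2 LH" shows "norm u \<le> sqrt (gmet H x u u) / sqrt c1"
proof -
  have c1: "c1 > 0" using assms Hok_c1 by blast
  have "sqrt c1 * norm u = sqrt (c1 * norm u ^ 2)" by (simp add: real_sqrt_mult)
  also have "\<dots> \<le> sqrt (gmet H x u u)" using Hok_pos[OF assms] by simp
  finally show ?thesis using c1 by (simp add: field_simps)
qed

lemma Hok_shift:
  assumes "Hok H c1 c2 LH" "dist y m \<le> \<delta>"
  shows "gmet H m u u \<le> (1 + LH * \<delta> / c1) * gmet H y u u"
proof -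
  have c1: "c1 > 0" and LH: "LH \<ge> 0" using assms Hok_c1 Hok_LH by blast+
  have "\<bar>gmet H m u u - gmet H y u u\<bar> \<le> LH * dist m y * (norm u)^2"
    by (rule gmet_lip[OF Hok_lip[OF assms(1)]])
  also have "\<dots> \<le> LH * \<delta> * (norm u)^2"
    using assms(2) LH by (simp add: dist_commute mult_left_mono mult_right_mono)
  also have "(norm u)^2 \<le> gmet H y u u / c1" using Hok_pos[OF assms(1)] c1 by (simp add: field_simps)
  then have "LH * \<delta> * (norm u)^2 \<le> LH * \<delta> * (gmet H y u u / c1)"
  proof -
    have "0 \<le> \<delta>" using assms(2) zero_le_dist[of y m] by linarith
    then show ?thesis using LH \<open>(norm u)^2 \<le> gmet H y u u / c1\<close> by (intro mult_left_mono) auto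
  qed
  finally have "gmet H m u u \<le> gmet H y u u + LH * \<delta> * (gmet H y u u / c1)" by linarith
  then show ?thesis by (simp add: field_simps)
qed

lemma fl_nonneg: "Hok H c1 c2 LH \<Longrightarrow> 0 \<le> fl H \<gamma> t"
  by (simp add: fl_def Hok_nonneg)

lemma fl_int:
  assumes "Hok H c1 c2 LH" "pwS \<gamma> S" "continuous_on {0..1} \<gamma>" "0 \<le> a" "a \<le> b" "b \<le> 1"
  shows "fl H \<gamma> integrable_on {a..b}"
proof -
  have "(\<lambda>t. (\<lambda>x u. sqrt (gmet H x u u)) (\<gamma> t) (vd \<gamma> t)) integrable_on {0..1}"
    using Hok_cont[OF assms(1)] by (intro pwS_integrable[OF assms(2,3)]) simp
  then have "fl H \<gamma> integrable_on {0..1}" by (simp add: fl_def[abs_def])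
  then show ?thesis by (rule integrable_subinterval_real) (use assms in auto)
qed

lemma fl_split:
  assumes "Hok H c1 c2 LH" "pwS \<gamma> S" "continuous_on {0..1} \<gamma>" "0 \<le> a" "a \<le> c" "c \<le> b" "b \<le> 1"
  shows "integral {a..c} (fl H \<gamma>) + integral {c..b} (fl H \<gamma>) = integral {a..b} (fl H \<gamma>)"
  using assms by (intro Henstock_Kurzweil_Integration.integral_combine fl_int[OF assms(1-3)]) auto

lemma fl_integral_nonneg:
  assumes "Hok H c1 c2 LH" "pwS \<gamma> S" "continuous_on {0..1} \<gamma>" "0 \<le> a" "a \<le> b" "b \<le> 1"
  shows "0 \<le> integral {a..b} (fl H \<gamma>)"
  using fl_int[OF assms] by (rule integral_nonneg) (simp add: fl_nonneg[OF assms(1)])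

lemma arc_bound:
  assumes "Hok H c1 c2 LH" "pwS \<gamma> S" "continuous_on {0..1} \<gamma>" "0 \<le> a" "a \<le> b" "b \<le> 1"
  shows "norm (\<gamma> b - \<gamma> a) \<le> integral {a..b} (fl H \<gamma>) / sqrt c1"
proof -
  have I: "(vd \<gamma> has_integral \<gamma> b - \<gamma> a) {a..b}" using pwS_FTC[OF assms(2-6)] .
  have "norm (integral {a..b} (vd \<gamma>)) \<le> integral {a..b} (\<lambda>t. fl H \<gamma> t / sqrt c1)"
  proof (rule integral_norm_bound_integral)
    show "vd \<gamma> integrable_on {a..b}" using I by blast
    show "(\<lambda>t. fl H \<gamma> t / sqrt c1) integrable_on {a..b}"
      using fl_int[OF assms] by (rule integrable_on_divide)
    fix t show "norm (vd \<gamma> t) \<le> fl H \<gamma> t / sqrt c1"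
      unfolding fl_def by (rule Hok_norm_le[OF assms(1)])
  qed
  also have "\<dots> = integral {a..b} (fl H \<gamma>) / sqrt c1" by simp
  finally show ?thesis using I by (simp add: integral_unique)
qed

lemma key_bound:
  assumes "Hok H c1 c2 LH" "pwS \<gamma> S" "continuous_on {0..1} \<gamma>" "0 \<le> a" "a \<le> b" "b \<le> 1"
    and dm: "\<And>t. t \<in> {a..b} \<Longrightarrow> dist (\<gamma> t) m \<le> \<delta>" and d0: "0 \<le> \<delta>"
  shows "gmet H m (\<gamma> b - \<gamma> a) (\<gamma> b - \<gamma> a) \<le> (1 + LH * \<delta> / c1) * (integral {a..b} (fl H \<gamma>))^2"
proof -
  define D where "D = \<gamma> b - \<gamma> a"
  define Q where "Q = gmet H m D D"
  define K where "K = 1 + LH * \<delta> / c1"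
  define I where "I = integral {a..b} (fl H \<gamma>)"
  have c1: "c1 > 0" and LH: "LH \<ge> 0" using assms(1) Hok_c1 Hok_LH by blast+
  have K0: "K \<ge> 1" unfolding K_def using c1 LH d0 by simp
  have Q0: "Q \<ge> 0" unfolding Q_def by (rule Hok_nonneg[OF assms(1)])
  have I0: "I \<ge> 0" unfolding I_def by (rule fl_integral_nonneg[OF assms(1-6)])
  have FT: "(vd \<gamma> has_integral D) {a..b}" unfolding D_def using pwS_FTC[OF assms(2-6)] .
  have "((\<lambda>v. gmet H m D v) \<circ> vd \<gamma> has_integral gmet H m D D) {a..b}"
    by (rule has_integral_linear[OF FT bounded_linear_gmet])
  then have QI: "((\<lambda>t. gmet H m D (vd \<gamma> t)) has_integral Q) {a..b}" by (simp add: o_def Q_def)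
  have pw: "gmet H m D (vd \<gamma> t) \<le> sqrt Q * sqrt K * fl H \<gamma> t" if t: "t \<in> {a..b}" for t
  proof -
    have "(gmet H m D (vd \<gamma> t))^2 \<le> Q * gmet H m (vd \<gamma> t) (vd \<gamma> t)"
      unfolding Q_def using Hok_sym[OF assms(1)] Hok_nonneg[OF assms(1)] Hok_posd[OF assms(1)]
      by (intro gmet_CS) auto
    then have "\<bar>gmet H m D (vd \<gamma> t)\<bar> \<le> sqrt (Q * gmet H m (vd \<gamma> t) (vd \<gamma> t))"
      using real_le_rsqrt by (metis real_sqrt_abs real_sqrt_le_mono)
    also have "\<dots> = sqrt Q * sqrt (gmet H m (vd \<gamma> t) (vd \<gamma> t))" by (simp add: real_sqrt_mult)
    also have "gmet H m (vd \<gamma> t) (vd \<gamma> t) \<le> K * gmet H (\<gamma> t) (vd \<gamma> t) (vd \<gamma> t)"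
      unfolding K_def by (rule Hok_shift[OF assms(1) dm[OF t]])
    then have "sqrt (gmet H m (vd \<gamma> t) (vd \<gamma> t)) \<le> sqrt K * fl H \<gamma> t"
      unfolding fl_def by (metis real_sqrt_le_mono real_sqrt_mult)
    then have "sqrt Q * sqrt (gmet H m (vd \<gamma> t) (vd \<gamma> t)) \<le> sqrt Q * (sqrt K * fl H \<gamma> t)"
      by (rule mult_left_mono) (simp add: Q0)
    finally show ?thesis by simp
  qed
  have "Q \<le> integral {a..b} (\<lambda>t. sqrt Q * sqrt K * fl H \<gamma> t)"
  proof -
    have "integral {a..b} (\<lambda>t. gmet H m D (vd \<gamma> t)) \<le> integral {a..b} (\<lambda>t. sqrt Q * sqrt K * fl H \<gamma> t)"
    proof (rule integral_le)
      show "(\<lambda>t. gmet H m D (vd \<gamma> t)) integrable_on {a..b}" using QI by blast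
      show "(\<lambda>t. sqrt Q * sqrt K * fl H \<gamma> t) integrable_on {a..b}"
        using integrable_on_cmult_left[OF fl_int[OF assms(1-6)], of "sqrt Q * sqrt K"] by simp
    qed (rule pw)
    then show ?thesis using QI by (simp add: integral_unique)
  qed
  also have "\<dots> = sqrt Q * (sqrt K * I)" by (simp add: I_def)
  finally have QQ: "Q \<le> sqrt Q * (sqrt K * I)" .
  have "sqrt Q \<le> sqrt K * I"
  proof (cases "Q = 0")
    case True then show ?thesis using I0 K0 by simp
  next
    case False
    then have "sqrt Q > 0" using Q0 by simp
    moreover have "sqrt Q * sqrt Q \<le> sqrt Q * (sqrt K * I)" using QQ Q0 by (simp del: real_sqrt_mult_self add: real_sqrt_mult_self)
    ultimately show ?thesis using mult_le_cancel_left_pos by blast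
  qed
  then have "(sqrt Q)^2 \<le> (sqrt K * I)^2" by (rule power_mono) (simp add: Q0)
  then show ?thesis using Q0 K0 by (simp add: Q_def D_def K_def I_def power_mult_distrib)
qed

lemma E_tra_alt:
  "E_tra H N q = (1 / real N) * (\<Sum>n<N. (real N)^2 * gmet H ((1/2) *\<^sub>R (q n + q (Suc n))) (q (Suc n) - q n) (q (Suc n) - q n))"
  unfolding E_tra_def Let_def gmet_scale2 ..

lemma discretize:
  assumes H: "Hok H c1 c2 LH" and pw: "pwS \<gamma> S" and cg: "continuous_on {0..1} \<gamma>" and N: "N \<ge> 1"
  defines "L \<equiv> curve_length H \<gamma>"
  shows "\<exists>q. q 0 = \<gamma> 0 \<and> q N = \<gamma> 1 \<and>
           E_tra H N q \<le> (1 + LH * (L / (real N * sqrt c1)) / c1) * L^2"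
proof -
  define s where "s t = integral {0..t} (fl H \<gamma>)" for t
  have c1: "c1 > 0" and LH: "LH \<ge> 0" using H Hok_c1 Hok_LH by blast+
  have Ls: "L = s 1" unfolding L_def s_def curve_length_fl ..
  have sdiff: "s b - s a = integral {a..b} (fl H \<gamma>)" if "0 \<le> a" "a \<le> b" "b \<le> 1" for a b
    using fl_split[OF H pw cg, of 0 a b] that unfolding s_def by simp
  have inn: "0 \<le> integral {a..b} (fl H \<gamma>)" if "0 \<le> a" "a \<le> b" "b \<le> 1" for a b
    using fl_integral_nonneg[OF H pw cg that] .
  have scont: "continuous_on {0..1} s"
    unfolding s_def by (rule indefinite_integral_continuous_1) (rule fl_int[OF H pw cg], auto)
  have s0: "s 0 = 0" unfolding s_def by simp
  have L0: "L \<ge> 0" using inn[of 0 1] sdiff[of 0 1] s0 Ls by simp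
  have Nr: "real N \<ge> 1" using N by simp
  have ex: "\<exists>t. 0 \<le> t \<and> t \<le> 1 \<and> s t = real n * L / real N" if "n \<le> N" for n
  proof -
    have "real n * L / real N \<le> L"
      using that L0 Nr by (simp add: field_simps mult_left_mono)
    moreover have "0 \<le> real n * L / real N" using L0 Nr by simp
    ultimately show ?thesis using IVT'[of s 0 "real n * L / real N" 1] scont s0 Ls by auto
  qed
  define tt where "tt n = (if n = 0 then 0 else if n = N then 1
      else (SOME t. 0 \<le> t \<and> t \<le> 1 \<and> s t = real n * L / real N))" for n
  have tt: "0 \<le> tt n \<and> tt n \<le> 1 \<and> s (tt n) = real n * L / real N" if "n \<le> N" for n
  proof (cases "n = 0")
    case True then show ?thesis using s0 tt_def by simp
  next
    case False
    show ?thesis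
    proof (cases "n = N")
      case True then show ?thesis using False Ls Nr tt_def by simp
    next
      case False2: False
      then show ?thesis using False tt_def someI_ex[OF ex[OF that]] by simp
    qed
  qed
  define q where "q n = \<gamma> (tt n)" for n
  define \<delta> where "\<delta> = L / (real N * sqrt c1)"
  define K where "K = 1 + LH * \<delta> / c1"
  have d0: "\<delta> \<ge> 0" unfolding \<delta>_def using L0 Nr c1 by simp
  have step: "gmet H ((1/2) *\<^sub>R (q n + q (Suc n))) (q (Suc n) - q n) (q (Suc n) - q n) \<le> K * (L / real N)^2"
    if n: "n < N" for n
  proof -
    define a where "a = min (tt n) (tt (Suc n))"
    define b where "b = max (tt n) (tt (Suc n))"
    have t1: "0 \<le> tt n" "tt n \<le> 1" "s (tt n) = real n * L / real N" using tt[of n] n by auto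
    have t2: "0 \<le> tt (Suc n)" "tt (Suc n) \<le> 1" "s (tt (Suc n)) = real (Suc n) * L / real N"
      using tt[of "Suc n"] n by auto
    have ab: "0 \<le> a" "a \<le> b" "b \<le> 1" using t1 t2 a_def b_def by auto
    have "s (tt (Suc n)) - s (tt n) = L / real N" using t1(3) t2(3) Nr by (simp add: field_simps)
    then have "\<bar>s (tt (Suc n)) - s (tt n)\<bar> = L / real N" using L0 Nr by simp
    moreover have "s a \<le> s b" using sdiff[OF ab] inn[OF ab] by simp
    then have "s b - s a = \<bar>s (tt (Suc n)) - s (tt n)\<bar>"
      unfolding a_def b_def by (cases "tt n \<le> tt (Suc n)") (auto simp: min_def max_def)
    ultimately have Iab: "integral {a..b} (fl H \<gamma>) = L / real N"
      using sdiff[OF ab] by simp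
    define m where "m = (1/2) *\<^sub>R (\<gamma> a + \<gamma> b)"
    have dm: "dist (\<gamma> t) m \<le> \<delta>" if t: "t \<in> {a..b}" for t
    proof -
      have ta: "0 \<le> a" "a \<le> t" "t \<le> b" "b \<le> 1" using t ab by auto
      have "norm (\<gamma> t - \<gamma> a) \<le> integral {a..t} (fl H \<gamma>) / sqrt c1"
        by (rule arc_bound[OF H pw cg]) (use ta in auto)
      also have "integral {a..t} (fl H \<gamma>) \<le> integral {a..b} (fl H \<gamma>)"
        using sdiff[of a t] sdiff[of t b] sdiff[of a b] inn[of t b] ta by simp
      finally have A: "norm (\<gamma> t - \<gamma> a) \<le> \<delta>" using c1 Iab
        by (simp add: \<delta>_def divide_right_mono field_simps)
      have "norm (\<gamma> b - \<gamma> t) \<le> integral {t..b} (fl H \<gamma>) / sqrt c1"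
        by (rule arc_bound[OF H pw cg]) (use ta in auto)
      also have "integral {t..b} (fl H \<gamma>) \<le> integral {a..b} (fl H \<gamma>)"
        using sdiff[of a t] sdiff[of t b] sdiff[of a b] inn[of a t] ta by simp
      finally have B: "norm (\<gamma> b - \<gamma> t) \<le> \<delta>" using c1 Iab
        by (simp add: \<delta>_def divide_right_mono field_simps)
      have "\<gamma> t - m = (1/2) *\<^sub>R (\<gamma> t - \<gamma> a) - (1/2) *\<^sub>R (\<gamma> b - \<gamma> t)"
        by (simp add: m_def vec_eq_iff algebra_simps)
      then have "norm (\<gamma> t - m) \<le> (1/2) * norm (\<gamma> t - \<gamma> a) + (1/2) * norm (\<gamma> b - \<gamma> t)"
        using norm_triangle_ineq4[of "(1/2) *\<^sub>R (\<gamma> t - \<gamma> a)" "(1/2) *\<^sub>R (\<gamma> b - \<gamma> t)"]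
        by simp
      then show ?thesis using A B by (simp add: dist_norm)
    qed
    have KB: "gmet H m (\<gamma> b - \<gamma> a) (\<gamma> b - \<gamma> a) \<le> K * (L / real N)^2"
      using key_bound[OF H pw cg ab dm d0] Iab unfolding K_def by simp
    show ?thesis
    proof (cases "tt n \<le> tt (Suc n)")
      case True
      then have "a = tt n" "b = tt (Suc n)" using a_def b_def by auto
      then show ?thesis using KB unfolding q_def m_def by simp
    next
      case False
      then have e: "a = tt (Suc n)" "b = tt n" using a_def b_def by auto
      have "q (Suc n) - q n = - (\<gamma> b - \<gamma> a)" unfolding q_def e by simp
      moreover have "(1/2) *\<^sub>R (q n + q (Suc n)) = m" unfolding q_def m_def e by simp
      ultimately have "gmet H ((1/2) *\<^sub>R (q n + q (Suc n))) (q (Suc n) - q n) (q (Suc n) - q n)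
          = gmet H m (- (\<gamma> b - \<gamma> a)) (- (\<gamma> b - \<gamma> a))" by (simp only:)
      also have "\<dots> = gmet H m (\<gamma> b - \<gamma> a) (\<gamma> b - \<gamma> a)" by (rule gmet_neg_neg)
      finally show ?thesis using KB by simp
    qed
  qed
  have "E_tra H N q \<le> (1 / real N) * (\<Sum>n<N. (real N)^2 * (K * (L / real N)^2))"
    unfolding E_tra_alt using step Nr
    by (intro mult_left_mono sum_mono) (auto intro: mult_left_mono)
  also have "\<dots> = K * L^2" using Nr by (simp add: field_simps power2_eq_square)
  finally have "E_tra H N q \<le> K * L^2" .
  moreover have "q 0 = \<gamma> 0" "q N = \<gamma> 1" unfolding q_def tt_def using N by auto
  ultimately show ?thesis unfolding K_def \<delta>_def by blast
qed

lemma lin_seg: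
  assumes n: "n < N" and t: "real n / real N < t" "t < real (Suc n) / real N"
  shows "lin_interp N p t = p n + (real N * t - real n) *\<^sub>R (p (Suc n) - p n)"
proof -
  have N0: "real N > 0" using n by simp
  have a: "real n < real N * t" using t(1) N0 by (simp add: field_simps)
  have b: "real N * t < real n + 1" using t(2) N0 by (simp add: field_simps)
  have "\<lfloor>real N * t\<rfloor> = int n" using a b by (simp add: floor_eq_iff)
  then have "nat \<lfloor>real N * t\<rfloor> = n" by simp
  moreover have "min n (N - 1) = n" using n by simp
  ultimately show ?thesis unfolding lin_interp_def Let_def
    by (simp add: algebra_simps)
qed

lemma lin_deriv:
  assumes n: "n < N" and t: "real n / real N < t" "t < real (Suc n) / real N"
  shows "(lin_interp N p has_vector_derivative real N *\<^sub>R (p (Suc n) - p n)) (at t)"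
proof -
  have d: "((\<lambda>t. p n + (real N * t - real n) *\<^sub>R (p (Suc n) - p n)) has_vector_derivative
           real N *\<^sub>R (p (Suc n) - p n)) (at t)"
    by (auto intro!: derivative_eq_intros)
  show ?thesis
  proof (rule has_vector_derivative_transform_within_open[OF d, where S="{real n / real N<..<real (Suc n) / real N}"])
    show "open {real n / real N<..<real (Suc n) / real N}" by simp
    show "t \<in> {real n / real N<..<real (Suc n) / real N}" using t by simp
    fix y assume "y \<in> {real n / real N<..<real (Suc n) / real N}"
    then show "p n + (real N * y - real n) *\<^sub>R (p (Suc n) - p n) = lin_interp N p y"
      using lin_seg[OF n, of y p] by simp
  qed
qed

lemma lin_vd:
  assumes n: "n < N" and t: "real n / real N < t" "t < real (Suc n) / real N"
  shows "vd (lin_interp N p) t = real N *\<^sub>R (p (Suc n) - p n)"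
proof -
  have N0: "real N > 0" using n by simp
  have "0 < t" by (rule le_less_trans[OF _ t(1)]) simp
  moreover have "t < 1"
  proof (rule less_le_trans[OF t(2)])
    show "real (Suc n) / real N \<le> 1" using n N0 by (simp add: field_simps)
  qed
  ultimately have "at t within {0..1} = at t" by (intro at_within_Icc_at) auto
  then show ?thesis unfolding vd_def using vector_derivative_at[OF lin_deriv[OF assms, of p]] by simp
qed

lemma integral_split_N:
  fixes f :: "real \<Rightarrow> real"
  assumes "f integrable_on {0..1}" "N \<ge> 1" "k \<le> N"
  shows "integral {0..real k / real N} f = (\<Sum>n<k. integral {real n / real N..real (Suc n) / real N} f)"
  using assms(3)
proof (induction k)
  case 0 then show ?case by simp
next
  case (Suc k)
  have N0: "real N > 0" using assms by simp
  have le: "real k / real N \<le> real (Suc k) / real N" using N0 by (simp add: divide_right_mono)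
  have le1: "real (Suc k) / real N \<le> 1" using Suc.prems N0 by (simp add: field_simps)
  have "integral {0..real k / real N} f + integral {real k / real N..real (Suc k) / real N} f
        = integral {0..real (Suc k) / real N} f"
    by (rule Henstock_Kurzweil_Integration.integral_combine)
       (use le le1 in \<open>auto intro: integrable_subinterval_real[OF assms(1)]\<close>)
  then show ?case using Suc by simp
qed

lemma E_tra_G:
  "E_tra H N p = (1 / real N) * (\<Sum>n<N. gmet H ((1/2) *\<^sub>R (p n + p (Suc n))) (real N *\<^sub>R (p (Suc n) - p n)) (real N *\<^sub>R (p (Suc n) - p n)))"
  unfolding E_tra_def Let_def ..

lemma lin_bound:
  assumes H: "Hok H c1 c2 LH" and N: "N \<ge> 1" and EB: "E_tra H N p \<le> B"
  shows "(curve_length H (lin_interp N p))^2 \<le> E_tra H N p + LH / 2 * (sqrt (B / c1) / sqrt (real N)) * (B / c1)"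
proof -
  define \<beta> where "\<beta> n = real N *\<^sub>R (p (Suc n) - p n)" for n
  define m where "m n = (1/2) *\<^sub>R (p n + p (Suc n))" for n
  define G where "G n = gmet H (m n) (\<beta> n) (\<beta> n)" for n
  define E where "E = E_tra H N p"
  define A where "A n = G n + LH * (norm (\<beta> n) / (2 * real N)) * (norm (\<beta> n))^2" for n
  define a where "a n = sqrt (A n)" for n
  define f where "f = fl H (lin_interp N p)"
  define M where "M = sqrt (B / c1) / (2 * sqrt (real N))"
  have c1: "c1 > 0" and LH: "LH \<ge> 0" using H Hok_c1 Hok_LH by blast+
  have Nr: "real N \<ge> 1" using N by simp
  have E_def2: "E = (1 / real N) * (\<Sum>n<N. G n)" unfolding E_def E_tra_G G_def m_def \<beta>_def ..
  have G0: "G n \<ge> 0" for n unfolding G_def by (rule Hok_nonneg[OF H])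
  have E0: "E \<ge> 0" unfolding E_def2 using G0 Nr by (simp add: sum_nonneg)
  have B0: "B \<ge> 0" using E0 EB E_def by simp
  have M0: "M \<ge> 0" unfolding M_def using B0 c1 by simp
  have A0: "A n \<ge> 0" for n unfolding A_def using G0 LH Nr by simp
  have f0: "f t \<ge> 0" for t unfolding f_def by (rule fl_nonneg[OF H])
  have RHS0: "0 \<le> E + LH * M * (B / c1)" using E0 LH B0 c1 by (simp add: M_def)
  have "LH / 2 * (sqrt (B / c1) / sqrt (real N)) * (B / c1) = LH * M * (B / c1)"
    by (simp add: M_def)
  then have goal_eq: "E_tra H N p + LH / 2 * (sqrt (B / c1) / sqrt (real N)) * (B / c1) = E + LH * M * (B / c1)"
    using E_def by simp
  have betaM: "norm (\<beta> n) / (2 * real N) \<le> M" if n: "n < N" for n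
  proof -
    have "c1 * norm (\<beta> n) ^ 2 \<le> G n" unfolding G_def by (rule Hok_pos[OF H])
    also have "G n \<le> (\<Sum>k<N. G k)" using n G0 by (intro member_le_sum) auto
    also have "\<dots> = real N * E" using E_def2 Nr by simp
    also have "\<dots> \<le> real N * B" using EB E_def Nr by simp
    finally have "norm (\<beta> n) ^ 2 \<le> real N * B / c1" using c1 by (simp add: field_simps)
    then have "norm (\<beta> n) \<le> sqrt (real N * B / c1)" by (simp add: real_le_rsqrt)
    also have "\<dots> = sqrt (real N) * sqrt (B / c1)" by (simp add: real_sqrt_mult[symmetric])
    finally have "norm (\<beta> n) / (2 * real N) \<le> sqrt (real N) * sqrt (B / c1) / (2 * real N)"
      using Nr by (simp add: divide_right_mono)
    also have "\<dots> = M" unfolding M_def using Nr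
      by (simp add: field_simps)
    finally show ?thesis .
  qed
  have sumbeta: "(1 / real N) * (\<Sum>n<N. (norm (\<beta> n))^2) \<le> B / c1"
  proof -
    have "(\<Sum>n<N. (norm (\<beta> n))^2) \<le> (\<Sum>n<N. G n / c1)"
      using Hok_pos[OF H] c1 unfolding G_def by (intro sum_mono) (simp add: field_simps)
    also have "\<dots> = (\<Sum>n<N. G n) / c1" by (simp add: sum_divide_distrib)
    finally have "(1 / real N) * (\<Sum>n<N. (norm (\<beta> n))^2) \<le> (1 / real N) * ((\<Sum>n<N. G n) / c1)"
      using Nr by (intro mult_left_mono) auto
    also have "\<dots> = E / c1" using E_def2 by simp
    also have "\<dots> \<le> B / c1" using EB E_def c1 by (simp add: divide_right_mono)
    finally show ?thesis .
  qed
  have sumA: "(1 / real N) * (\<Sum>n<N. A n) \<le> E + LH * M * (B / c1)"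
  proof -
    have "(\<Sum>n<N. A n) = (\<Sum>n<N. G n) + (\<Sum>n<N. LH * (norm (\<beta> n) / (2 * real N)) * (norm (\<beta> n))^2)"
      unfolding A_def by (simp add: sum.distrib)
    also have "(\<Sum>n<N. LH * (norm (\<beta> n) / (2 * real N)) * (norm (\<beta> n))^2) \<le> (\<Sum>n<N. LH * M * (norm (\<beta> n))^2)"
      using betaM LH by (intro sum_mono mult_right_mono mult_left_mono) auto
    finally have "(1 / real N) * (\<Sum>n<N. A n) \<le> (1 / real N) * ((\<Sum>n<N. G n) + (\<Sum>n<N. LH * M * (norm (\<beta> n))^2))"
      using Nr by (intro mult_left_mono) auto
    also have "\<dots> = E + LH * M * ((1 / real N) * (\<Sum>n<N. (norm (\<beta> n))^2))"
      unfolding E_def2 by (simp add: sum_distrib_left[symmetric] algebra_simps)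
    also have "\<dots> \<le> E + LH * M * (B / c1)"
      using sumbeta LH M0 by (intro add_left_mono mult_left_mono) auto
    finally show ?thesis .
  qed
  show ?thesis
  proof (cases "f integrable_on {0..1}")
    case False
    then have "curve_length H (lin_interp N p) = 0"
      unfolding curve_length_fl f_def[symmetric] by (rule not_integrable_integral)
    then show ?thesis using RHS0 goal_eq by simp
  next
    case True
    have L_split: "curve_length H (lin_interp N p) = (\<Sum>n<N. integral {real n / real N..real (Suc n) / real N} f)"
      using integral_split_N[OF True N order_refl] Nr unfolding curve_length_fl f_def by simp
    have seg: "integral {real n / real N..real (Suc n) / real N} f \<le> a n / real N" if n: "n < N" for n
    proof -
      define lo where "lo = real n / real N"
      define hi where "hi = real (Suc n) / real N"
      have lohi: "0 \<le> lo" "lo \<le> hi" "hi \<le> 1" "hi - lo = 1 / real N"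
      proof -
        show "0 \<le> lo" unfolding lo_def by simp
        show "lo \<le> hi" unfolding lo_def hi_def by (rule divide_right_mono) auto
        show "hi \<le> 1" unfolding hi_def using n Nr by simp
        show "hi - lo = 1 / real N" unfolding lo_def hi_def by (simp add: diff_divide_distrib[symmetric])
      qed
      have fi: "f integrable_on {lo..hi}" by (rule integrable_subinterval_real[OF True]) (use lohi in auto)
      have pt: "f t \<le> a n" if t: "lo < t" "t < hi" for t
      proof -
        define s where "s = real N * t - real n"
        have s01: "0 < s" "s < 1" using t Nr unfolding s_def lo_def hi_def by (auto simp: field_simps)
        have lt: "lin_interp N p t = p n + s *\<^sub>R (p (Suc n) - p n)"
          unfolding s_def by (rule lin_seg[OF n]) (use t lo_def hi_def in auto)
        have vt: "vd (lin_interp N p) t = \<beta> n"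
          unfolding \<beta>_def by (rule lin_vd[OF n]) (use t lo_def hi_def in auto)
        have "lin_interp N p t - m n = (s - 1/2) *\<^sub>R (p (Suc n) - p n)"
          unfolding lt m_def by (simp add: vec_eq_iff algebra_simps)
        then have "dist (lin_interp N p t) (m n) = \<bar>s - 1/2\<bar> * norm (p (Suc n) - p n)"
          by (simp add: dist_norm)
        also have "\<dots> \<le> (1/2) * norm (p (Suc n) - p n)"
          using s01 by (intro mult_right_mono) (auto simp: abs_if)
        also have "norm (p (Suc n) - p n) = norm (\<beta> n) / real N"
          unfolding \<beta>_def using Nr by simp
        finally have dd: "dist (lin_interp N p t) (m n) \<le> norm (\<beta> n) / (2 * real N)" by simp
        have "gmet H (lin_interp N p t) (\<beta> n) (\<beta> n) \<le> G n + LH * dist (lin_interp N p t) (m n) * (norm (\<beta> n))^2"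
          using gmet_lip[OF Hok_lip[OF H, where x="lin_interp N p t" and y="m n"], where u="\<beta> n"] unfolding G_def by linarith
        also have "\<dots> \<le> A n" unfolding A_def
          using dd LH by (intro add_left_mono mult_right_mono mult_left_mono) auto
        finally show ?thesis unfolding f_def fl_def vt a_def by simp
      qed
      define g where "g t = min (f t) (a n)" for t
      have spike: "g t = f t" if "t \<in> {lo..hi} - {lo, hi}" for t
      proof -
        from that have "lo < t" "t < hi" by auto
        then have "f t \<le> a n" by (rule pt)
        then show ?thesis unfolding g_def by (rule min_absorb1)
      qed
      have neg: "negligible {lo, hi}" by (rule negligible_finite) simp
      have gi: "g integrable_on {lo..hi}" by (rule integrable_spike[OF fi neg spike])
      have "integral {lo..hi} f = integral {lo..hi} g"
        by (rule integral_spike[OF neg spike])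
      also have "\<dots> \<le> integral {lo..hi} (\<lambda>t. a n)"
      proof (rule integral_le[OF gi])
        show "(\<lambda>t. a n) integrable_on {lo..hi}" by (rule integrable_const_ivl)
        fix t show "g t \<le> a n" unfolding g_def by (rule min.cobounded2)
      qed
      also have "\<dots> = (hi - lo) * a n" using lohi(2) by (simp add: integral_const_real)
      also have "\<dots> = a n / real N" using lohi(4) by simp
      finally show ?thesis unfolding lo_def hi_def .
    qed
    define T where "T = (\<Sum>n<N. a n / real N)"
    have L0: "0 \<le> curve_length H (lin_interp N p)"
      unfolding curve_length_fl f_def[symmetric] using True f0 by (intro integral_nonneg) auto
    have LT: "curve_length H (lin_interp N p) \<le> T" unfolding L_split T_def using seg by (intro sum_mono) auto
    have "(curve_length H (lin_interp N p))^2 \<le> T^2" using L0 LT by (intro power_mono) auto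
    also have "T^2 \<le> (\<Sum>n<N. (a n / real N)^2) * real (card {..<N})"
      unfolding T_def by (rule sum_squared_le_sum_of_squares)
    also have "\<dots> = (1 / real N) * (\<Sum>n<N. A n)"
      using Nr A0 by (simp add: a_def power_divide sum_divide_distrib[symmetric] field_simps power2_eq_square)
    also have "\<dots> \<le> E + LH * M * (B / c1)" by (rule sumA)
    finally show ?thesis using goal_eq by simp
  qed
qed

lemma arith1:
  fixes L B c1 LH :: real
  assumes "0 \<le> L" "L^2 \<le> B" "c1 > 0" "LH \<ge> 0" "real N \<ge> 1"
  shows "(1 + LH * (L / (real N * sqrt c1)) / c1) * L^2 \<le> L^2 + LH * sqrt (B / c1) * (B / c1) / sqrt (real N)"
proof -
  have B0: "B \<ge> 0" using assms(2) by (meson order_trans zero_le_power2)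
  have LB: "L \<le> sqrt B" using assms(1,2) real_le_rsqrt by blast
  have L3: "L * L^2 \<le> sqrt B * B" using LB assms(1,2) B0 by (intro mult_mono) auto
  have s1: "1 \<le> sqrt (real N)" using assms(5) by simp
  then have "sqrt (real N) * 1 \<le> sqrt (real N) * sqrt (real N)" by (intro mult_left_mono) auto
  then have sN: "sqrt (real N) \<le> real N" by simp
  have sN0: "sqrt (real N) > 0" using assms(5) by simp
  have "LH * (L / (real N * sqrt c1)) / c1 * L^2 = (LH / (sqrt c1 * c1)) * (L * L^2) / real N"
    by (simp add: field_simps)
  also have "\<dots> \<le> (LH / (sqrt c1 * c1)) * (sqrt B * B) / real N"
    using L3 assms by (intro divide_right_mono mult_left_mono) auto
  also have "\<dots> \<le> (LH / (sqrt c1 * c1)) * (sqrt B * B) / sqrt (real N)"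
    using sN sN0 assms B0 by (intro divide_left_mono) auto
  also have "\<dots> = LH * sqrt (B / c1) * (B / c1) / sqrt (real N)"
    using assms by (simp add: real_sqrt_divide field_simps)
  finally show ?thesis by (simp add: algebra_simps)
qed

lemma line_pw_C1:
  fixes x0 y0 :: "real^'n"
  shows "pw_C1 (\<lambda>t. x0 + t *\<^sub>R (y0 - x0))"
  unfolding pw_C1_def
proof (intro conjI exI[of _ "{0,1}"])
  show "continuous_on {0..1} (\<lambda>t. x0 + t *\<^sub>R (y0 - x0))" by (intro continuous_intros)
  show "\<forall>a\<in>{0,1}. \<forall>b\<in>{0,1}. a < b \<and> {a<..<b} \<inter> {0,1} = {} \<longrightarrow>
        (\<exists>\<gamma>'. continuous_on {a..b} \<gamma>' \<and>
           (\<forall>t\<in>{a..b}. ((\<lambda>t. x0 + t *\<^sub>R (y0 - x0)) has_vector_derivative \<gamma>' t) (at t within {a..b})))"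
  proof (intro ballI impI exI[of _ "\<lambda>t. y0 - x0"] conjI)
    fix a b :: real and t
    show "continuous_on {a..b} (\<lambda>t. y0 - x0)" by simp
    show "((\<lambda>t. x0 + t *\<^sub>R (y0 - x0)) has_vector_derivative y0 - x0) (at t within {a..b})"
      by (auto intro!: derivative_eq_intros)
  qed
qed auto

lemma line_E_tra:
  fixes x0 y0 :: "real^'n"
  assumes H: "Hok H c1 c2 LH" and N: "N \<ge> 1"
  shows "E_tra H N (\<lambda>n. x0 + (real n / real N) *\<^sub>R (y0 - x0)) \<le> c2 * (norm (y0 - x0))^2"
proof -
  have Nr: "real N \<ge> 1" using N by simp
  have st: "real N *\<^sub>R ((x0 + (real (Suc n) / real N) *\<^sub>R (y0 - x0)) - (x0 + (real n / real N) *\<^sub>R (y0 - x0))) = y0 - x0" for n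
  proof -
    have "(x0 + (real (Suc n) / real N) *\<^sub>R (y0 - x0)) - (x0 + (real n / real N) *\<^sub>R (y0 - x0))
          = (real (Suc n) / real N - real n / real N) *\<^sub>R (y0 - x0)" by (simp add: scaleR_diff_left)
    also have "real (Suc n) / real N - real n / real N = 1 / real N" by (simp add: diff_divide_distrib[symmetric])
    finally show ?thesis using Nr by simp
  qed
  have "E_tra H N (\<lambda>n. x0 + (real n / real N) *\<^sub>R (y0 - x0)) \<le> (1 / real N) * (\<Sum>n<N. c2 * (norm (y0 - x0))^2)"
    unfolding E_tra_G st using Hok_up[OF H] Nr by (intro mult_left_mono sum_mono) auto
  also have "\<dots> = c2 * (norm (y0 - x0))^2" using Nr by simp
  finally show ?thesis .
qed

lemma Hok_intro:
  assumes "c1 > 0" "LH \<ge> 0" "smooth_metric H"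
    "\<forall>x u. c1 * norm u ^ 2 \<le> gmet H x u u \<and> gmet H x u u \<le> c2 * norm u ^ 2"
    "\<forall>x y. onorm (\<lambda>v. (H x - H y) *v v) \<le> LH * dist x y"
  shows "Hok H c1 c2 LH"
  using assms smooth_fun_cont unfolding Hok_def smooth_metric_def by blast

theorem theorem1p2:
  fixes c1 c2 LH d :: real and X0 X1 :: "(real^'n) set"
  assumes "c1 > 0" "c2 > 0" "LH \<ge> 0"
    and "closed X0" "closed X1" "X0 \<noteq> {}" "X1 \<noteq> {}" "bounded X0 \<or> bounded X1"
  shows "\<exists>C. \<forall>H. smooth_metric H
      \<and> (\<forall>x u. c1 * norm u ^ 2 \<le> gmet H x u u \<and> gmet H x u u \<le> c2 * norm u ^ 2)
      \<and> (\<forall>x y. onorm (\<lambda>v. (H x - H y) *v v) \<le> LH * dist x y)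
      \<and> gsetdist H X0 X1 = d
      \<longrightarrow> (\<forall>N p. N \<ge> 1 \<and> p 0 \<in> X0 \<and> p N \<in> X1
             \<and> (\<forall>q. q 0 \<in> X0 \<and> q N \<in> X1 \<longrightarrow> E_tra H N p \<le> E_tra H N q)
           \<longrightarrow> (curve_length H (lin_interp N p))\<^sup>2
                 - (INF \<gamma>\<in>{\<gamma>. pw_C1 \<gamma> \<and> \<gamma> 0 \<in> X0 \<and> \<gamma> 1 \<in> X1}. (curve_length H \<gamma>)\<^sup>2)
               \<le> C / sqrt (real N))"
proof -
  obtain x0 where x0: "x0 \<in> X0" using assms(6) by blast
  obtain y0 where y0: "y0 \<in> X1" using assms(7) by blast
  define B where "B = c2 * (norm (y0 - x0))^2"
  define C1 where "C1 = LH * sqrt (B / c1) * (B / c1)"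
  have B0: "B \<ge> 0" unfolding B_def using assms(2) by simp
  have C10: "C1 \<ge> 0" unfolding C1_def using B0 assms(1,3) by simp
  show ?thesis
  proof (intro exI[of _ "2 * C1"] allI impI)
    fix H :: "real^'n \<Rightarrow> real^'n^'n" and N :: nat and p
    assume hH: "smooth_metric H
      \<and> (\<forall>x u. c1 * norm u ^ 2 \<le> gmet H x u u \<and> gmet H x u u \<le> c2 * norm u ^ 2)
      \<and> (\<forall>x y. onorm (\<lambda>v. (H x - H y) *v v) \<le> LH * dist x y)
      \<and> gsetdist H X0 X1 = d"
    assume hp: "N \<ge> 1 \<and> p 0 \<in> X0 \<and> p N \<in> X1
             \<and> (\<forall>q. q 0 \<in> X0 \<and> q N \<in> X1 \<longrightarrow> E_tra H N p \<le> E_tra H N q)"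
    have H: "Hok H c1 c2 LH" using Hok_intro[OF assms(1,3)] hH by blast
    have N: "N \<ge> 1" using hp by blast
    have Nr: "real N \<ge> 1" using N by simp
    have sN0: "sqrt (real N) > 0" using Nr by simp
    have pmin: "E_tra H N p \<le> E_tra H N q" if "q 0 \<in> X0" "q N \<in> X1" for q using hp that by blast
    have EB: "E_tra H N p \<le> B"
    proof -
      have "E_tra H N p \<le> E_tra H N (\<lambda>n. x0 + (real n / real N) *\<^sub>R (y0 - x0))"
        using x0 y0 N by (intro pmin) auto
      also have "\<dots> \<le> B" unfolding B_def by (rule line_E_tra[OF H N])
      finally show ?thesis .
    qed
    define LP where "LP = curve_length H (lin_interp N p)"
    have LPb: "LP^2 \<le> E_tra H N p + C1 / 2 / sqrt (real N)"
      using lin_bound[OF H N EB] unfolding LP_def C1_def by (simp add: mult_ac)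
    define A where "A = {\<gamma>. pw_C1 \<gamma> \<and> \<gamma> 0 \<in> X0 \<and> \<gamma> 1 \<in> X1}"
    have Ane: "A \<noteq> {}"
    proof -
      have "(\<lambda>t. x0 + t *\<^sub>R (y0 - x0)) \<in> A" unfolding A_def using line_pw_C1 x0 y0 by simp
      then show ?thesis by blast
    qed
    have low: "LP^2 - 2 * C1 / sqrt (real N) \<le> (curve_length H \<gamma>)^2" if g: "\<gamma> \<in> A" for \<gamma>
    proof -
      have pw: "pw_C1 \<gamma>" and g0: "\<gamma> 0 \<in> X0" and g1: "\<gamma> 1 \<in> X1" using g A_def by auto
      obtain S where S: "pwS \<gamma> S" using pw_C1_pwS[OF pw] by blast
      have cg: "continuous_on {0..1} \<gamma>" using pw pw_C1_def by blast
      define L where "L = curve_length H \<gamma>"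
      have L0: "L \<ge> 0" unfolding L_def curve_length_fl by (rule fl_integral_nonneg[OF H S cg]) auto
      have "E_tra H N p \<le> L^2 + C1 / sqrt (real N)"
      proof (cases "L^2 \<le> B")
        case True
        obtain q where q: "q 0 = \<gamma> 0" "q N = \<gamma> 1"
          "E_tra H N q \<le> (1 + LH * (L / (real N * sqrt c1)) / c1) * L^2"
          using discretize[OF H S cg N] unfolding L_def by blast
        have "E_tra H N p \<le> E_tra H N q" using q g0 g1 by (intro pmin) auto
        also have "\<dots> \<le> (1 + LH * (L / (real N * sqrt c1)) / c1) * L^2" by (rule q(3))
        also have "\<dots> \<le> L^2 + C1 / sqrt (real N)" unfolding C1_def
          by (rule arith1[OF L0 True assms(1,3) Nr])
        finally show ?thesis .
      next
        case False
        have "0 \<le> C1 / sqrt (real N)" using C10 sN0 by simp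
        then show ?thesis using EB False by linarith
      qed
      then have "LP^2 \<le> L^2 + C1 / sqrt (real N) + C1 / 2 / sqrt (real N)" using LPb by linarith
      moreover have "C1 / sqrt (real N) + C1 / 2 / sqrt (real N) \<le> 2 * C1 / sqrt (real N)"
        using C10 sN0 by (simp add: field_simps)
      ultimately show ?thesis unfolding L_def by linarith
    qed
    have "LP^2 - 2 * C1 / sqrt (real N) \<le> (INF \<gamma>\<in>A. (curve_length H \<gamma>)^2)"
      by (rule cINF_greatest[OF Ane low])
    then show "(curve_length H (lin_interp N p))\<^sup>2
                 - (INF \<gamma>\<in>{\<gamma>. pw_C1 \<gamma> \<and> \<gamma> 0 \<in> X0 \<and> \<gamma> 1 \<in> X1}. (curve_length H \<gamma>)\<^sup>2)
               \<le> 2 * C1 / sqrt (real N)" unfolding LP_def A_def by linarith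
  qed
qed

end
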